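(* Let $\Omega\subset\mathbb{C}^d$ be a bounded open set which is locally convexifiable and has finite local line type $L$, and let $\{(V_\xi,\Phi_\xi):\xi\in\partial\Omega\}$ be a good locally convex atlas. Then there exist $c,\epsilon>0$ such that $$K_\Omega(p;v)\le K_{\Omega\cap V_\xi}(p;v)\le e^{c\,\delta_\Omega(p)^{1/L}}K_\Omega(p;v)$$ for every $\xi\in\partial\Omega$, every $p\in B_\epsilon(\xi)\cap\Omega$ and every $v\in\mathbb{C}^d$.
   Context: $K_\Omega(p;v)=\inf\{|\zeta|: f:\Delta\to\Omega\text{ holomorphic}, f(0)=p, df(\zeta)=v\}$ is the infinitesimal Kobayashi metric. $\delta_\Omega(p)$ is the Euclidean distance to $\mathbb{C}^d\setminus\Omega$, and $\delta_\Omega(p;v)=\inf\{\|q-p\|:q\in(p+\mathbb{C}v)\setminus\Omega\}$. A local convex chart at $\xi\in\partial\Omega$ is a pair $(V_\xi,\Phi_\xi)$ with $V_\xi$ a neighborhood of $\xi$ and $\Phi_\xi:V_\xi\to\mathbb{C}^d$ a biholomorphism onto its image such that $\Omega_\xi:=\Phi_\xi(V_\xi\cap\Omega)$ is convex; a locally convex atlas is a choice of such a chart for every $\xi\in\partial\Omega$, and $\Omega$ is locally convexifiable if one exists. $\Omega$ has finite local line type $L$ if $\partial\Omega$ is a $C^L$ hypersurface and there is a locally convex atlas such that each hypersurface $\Phi_\xi(\partial\Omega\cap V_\xi)$ has line type at most $L$ near $\Phi_\xi(\xi)$, with equality attained for some $\xi$; here the line type of a hypersurface $\{r=0\}$ at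 $x$ is the supremum over non-trivial complex affine $\ell:\mathbb{C}\to\mathbb{C}^d$ with $\ell(0)=x$ of the order of vanishing of $r\circ\ell$ at $0$. A locally convex atlas is good if there are $C,\tau>0$ such that for every $\xi\in\partial\Omega$: $B_\tau(\xi)\subset V_\xi$; $\delta_{\Omega_\xi}(p;v)\le C\delta_{\Omega_\xi}(p)^{1/L}$ for all $p\in\Omega_\xi$ and $v\neq0$; and $C^{-1}\|p-q\|\le\|\Phi_\xi(p)-\Phi_\xi(q)\|\le C\|p-q\|$ for all $p,q\in V_\xi$. *)

theory Defs
  imports "HOL-Analysis.Analysis"
begin

text \<open>Points of C^d are modelled as complex^'n, 'n a finite index type (d = CARD('n)).\<close>

fun Ck_on :: "nat \<Rightarrow> ('a::euclidean_space) set \<Rightarrow> ('a \<Rightarrow> real) \<Rightarrow> bool" where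
  "Ck_on 0 U f = continuous_on U f"
| "Ck_on (Suc k) U f = (f differentiable_on U \<and>
      (\<forall>b\<in>Basis. Ck_on k U (\<lambda>x. frechet_derivative f (at x) b)))"

definition holo_map :: "(complex^'n \<Rightarrow> complex^'m) \<Rightarrow> (complex^'n) set \<Rightarrow> bool" where
  "holo_map f S \<longleftrightarrow> (\<forall>x\<in>S. \<exists>L. (f has_derivative L) (at x) \<and>
       (\<forall>c y. L (c *s y) = c *s L y))"

definition biholo_onto_image :: "(complex^'n \<Rightarrow> complex^'n) \<Rightarrow> (complex^'n) set \<Rightarrow> bool" where
  "biholo_onto_image F V \<longleftrightarrow> holo_map F V \<and> inj_on F V \<and> holo_map (inv_into V F) (F ` V)"

definition holo_disc :: "(complex \<Rightarrow> complex^'n) \<Rightarrow> bool" where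
  "holo_disc f \<longleftrightarrow> (\<forall>i. (\<lambda>z. f z $ i) holomorphic_on ball 0 1)"

definition disc_deriv0 :: "(complex \<Rightarrow> complex^'n) \<Rightarrow> complex^'n" where
  "disc_deriv0 f = (\<chi> i. deriv (\<lambda>z. f z $ i) 0)"

definition kobayashi :: "(complex^'n) set \<Rightarrow> complex^'n \<Rightarrow> complex^'n \<Rightarrow> real" where
  "kobayashi \<Omega> p v = Inf {cmod \<zeta> | \<zeta>. \<exists>f. holo_disc f \<and> f ` ball 0 1 \<subseteq> \<Omega> \<and> f 0 = p
        \<and> \<zeta> *s disc_deriv0 f = v}"

definition bdist :: "(complex^'n) set \<Rightarrow> complex^'n \<Rightarrow> real" where
  "bdist \<Omega> p = infdist p (UNIV - \<Omega>)"

definition bdist_dir :: "(complex^'n) set \<Rightarrow> complex^'n \<Rightarrow> complex^'n \<Rightarrow> ereal" where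
  "bdist_dir \<Omega> p v = (INF q \<in> {p + z *s v | z. True} - \<Omega>. ereal (norm (q - p)))"

definition local_defining_fn :: "nat \<Rightarrow> (complex^'n) set \<Rightarrow> (complex^'n) set \<Rightarrow> (complex^'n \<Rightarrow> real) \<Rightarrow> bool" where
  "local_defining_fn k M U r \<longleftrightarrow> open U \<and> Ck_on k U r \<and>
      (\<forall>y\<in>U. \<exists>h. frechet_derivative r (at y) h \<noteq> 0) \<and> M \<inter> U = {y\<in>U. r y = 0}"

definition Ck_hypersurface :: "nat \<Rightarrow> (complex^'n) set \<Rightarrow> bool" where
  "Ck_hypersurface k M \<longleftrightarrow> (\<forall>x\<in>M. \<exists>U r. x \<in> U \<and> local_defining_fn k M U r)"

definition ord_vanish :: "(complex \<Rightarrow> real) \<Rightarrow> enat" where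
  "ord_vanish g = Sup {enat m | m. \<exists>C. eventually (\<lambda>z. \<bar>g z\<bar> \<le> C * cmod z ^ m) (at 0)}"

definition line_type :: "(complex^'n) set \<Rightarrow> complex^'n \<Rightarrow> enat" where
  "line_type M x = (let r = (SOME r. \<exists>U. x \<in> U \<and> local_defining_fn 1 M U r) in
      (SUP a \<in> {a. a \<noteq> 0}. ord_vanish (\<lambda>z. r (x + z *s a))))"

definition locally_convex_atlas :: "(complex^'n) set \<Rightarrow> (complex^'n \<Rightarrow> (complex^'n) set)
      \<Rightarrow> (complex^'n \<Rightarrow> complex^'n \<Rightarrow> complex^'n) \<Rightarrow> bool" where
  "locally_convex_atlas \<Omega> V \<Phi> \<longleftrightarrow> (\<forall>\<xi>\<in>frontier \<Omega>. open (V \<xi>) \<and> \<xi> \<in> V \<xi> \<and>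
      biholo_onto_image (\<Phi> \<xi>) (V \<xi>) \<and> convex (\<Phi> \<xi> ` (V \<xi> \<inter> \<Omega>)))"

definition locally_convexifiable :: "(complex^'n) set \<Rightarrow> bool" where
  "locally_convexifiable \<Omega> \<longleftrightarrow> (\<exists>V \<Phi>. locally_convex_atlas \<Omega> V \<Phi>)"

definition finite_local_line_type :: "(complex^'n) set \<Rightarrow> nat \<Rightarrow> bool" where
  "finite_local_line_type \<Omega> L \<longleftrightarrow> Ck_hypersurface L (frontier \<Omega>) \<and>
    (\<exists>V \<Phi>. locally_convex_atlas \<Omega> V \<Phi> \<and>
       (\<forall>\<xi>\<in>frontier \<Omega>. \<exists>W. open W \<and> \<Phi> \<xi> \<xi> \<in> W \<and>
          (\<forall>x\<in>\<Phi> \<xi> ` (frontier \<Omega> \<inter> V \<xi>) \<inter> W.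
              line_type (\<Phi> \<xi> ` (frontier \<Omega> \<inter> V \<xi>)) x \<le> enat L)) \<and>
       (\<exists>\<xi>\<in>frontier \<Omega>. line_type (\<Phi> \<xi> ` (frontier \<Omega> \<inter> V \<xi>)) (\<Phi> \<xi> \<xi>) = enat L))"

definition good_atlas :: "(complex^'n) set \<Rightarrow> nat \<Rightarrow> (complex^'n \<Rightarrow> (complex^'n) set)
      \<Rightarrow> (complex^'n \<Rightarrow> complex^'n \<Rightarrow> complex^'n) \<Rightarrow> bool" where
  "good_atlas \<Omega> L V \<Phi> \<longleftrightarrow> locally_convex_atlas \<Omega> V \<Phi> \<and>
    (\<exists>C \<tau>. C > 0 \<and> \<tau> > 0 \<and> (\<forall>\<xi>\<in>frontier \<Omega>.
       ball \<xi> \<tau> \<subseteq> V \<xi> \<and>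
       (\<forall>p\<in>\<Phi> \<xi> ` (V \<xi> \<inter> \<Omega>). \<forall>v. v \<noteq> 0 \<longrightarrow>
          bdist_dir (\<Phi> \<xi> ` (V \<xi> \<inter> \<Omega>)) p v
            \<le> ereal (C * bdist (\<Phi> \<xi> ` (V \<xi> \<inter> \<Omega>)) p powr (1 / real L))) \<and>
       (\<forall>p\<in>V \<xi>. \<forall>q\<in>V \<xi>. norm (p - q) / C \<le> norm (\<Phi> \<xi> p - \<Phi> \<xi> q) \<and>
          norm (\<Phi> \<xi> p - \<Phi> \<xi> q) \<le> C * norm (p - q))))"

end

theory Submission
  imports Defs "HOL-Complex_Analysis.Complex_Analysis" "HOL-Homology.Invariance_of_Domain"
begin


lemma norm_smult_vec: "norm (c *s (y::complex^'n)) = cmod c * norm y"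
  unfolding norm_vec_def by (simp add: L2_set_right_distrib norm_mult)

definition cip :: "complex^'n \<Rightarrow> complex^'n \<Rightarrow> complex" where
  "cip x y = (\<Sum>i\<in>UNIV. x$i * cnj (y$i))"

lemma Re_cip: "Re (cip x y) = inner x y"
  unfolding cip_def inner_vec_def by (simp add: Re_sum inner_complex_def)

lemma cip_smult: "cip (c *s x) y = c * cip x y"
  unfolding cip_def by (simp add: sum_distrib_left mult.assoc)
lemma cip_smult_right: "cip x (c *s y) = cnj c * cip x y"
  unfolding cip_def by (simp add: sum_distrib_left algebra_simps)
lemma cip_add: "cip (x + y) z = cip x z + cip y z"
  unfolding cip_def by (simp add: sum.distrib algebra_simps)
lemma cip_diff: "cip (x - y) z = cip x z - cip y z"
  unfolding cip_def by (simp add: sum_subtractf algebra_simps)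
lemma cip_minus: "cip (- x) z = - cip x z"
  unfolding cip_def by (simp add: sum_negf)

lemma bounded_linear_cip: "bounded_linear (\<lambda>x. cip x n)"
proof -
  have "bounded_linear (\<lambda>x. \<Sum>i\<in>UNIV. x$i * cnj (n$i))"
    by (intro bounded_linear_sum bounded_linear_mult_const bounded_linear_vec_nth) 
  then show ?thesis unfolding cip_def .
qed

lemma norm_cip: "cmod (cip x y) \<le> norm x * norm y"
proof (cases "cip x y = 0")
  case True then show ?thesis by simp
next
  case False
  define \<theta> where "\<theta> = cip x y / cmod (cip x y)"
  have th: "cmod \<theta> = 1" using False by (simp add: \<theta>_def norm_divide)
  have "cip x (\<theta> *s y) = cnj \<theta> * cip x y" by (simp add: cip_smult_right)
  also have "\<dots> = complex_of_real (cmod (cip x y))"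
    using False unfolding \<theta>_def
    by (simp add: complex_norm_square[symmetric] power2_eq_square field_simps)
  finally have "cmod (cip x y) = inner x (\<theta> *s y)"
    by (metis Re_cip Re_complex_of_real)
  also have "\<dots> \<le> norm x * norm (\<theta> *s y)" by (rule norm_cauchy_schwarz)
  also have "\<dots> = norm x * norm y" by (simp add: norm_smult_vec th)
  finally show ?thesis .
qed

lemma vec_has_derivative:
  fixes f :: "complex \<Rightarrow> complex^'n"
  assumes "\<And>i. ((\<lambda>z. f z $ i) has_field_derivative d i) (at w)"
  shows "(f has_derivative (\<lambda>c. c *s (\<chi> i. d i))) (at w)"
proof -
  have "\<forall>b\<in>Basis. ((\<lambda>x. f x \<bullet> b) has_derivative (\<lambda>c. (c *s (\<chi> i. d i)) \<bullet> b)) (at w within UNIV)"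
  proof
    fix b :: "complex^'n" assume "b \<in> Basis"
    then obtain i u where b: "b = axis i u" "u \<in> Basis" unfolding Basis_vec_def by auto
    have "((\<lambda>z. f z $ i) has_derivative (\<lambda>c. d i * c)) (at w)"
      using assms[of i] by (simp add: has_field_derivative_def)
    then have "((\<lambda>z. inner (f z $ i) u) has_derivative (\<lambda>c. inner (d i * c) u)) (at w)"
      by (rule bounded_linear.has_derivative[OF bounded_linear_inner_left])
    then show "((\<lambda>x. f x \<bullet> b) has_derivative (\<lambda>c. (c *s (\<chi> i. d i)) \<bullet> b)) (at w within UNIV)"
      by (simp add: b inner_axis mult.commute)
  qed
  then show ?thesis using has_derivative_componentwise_within by blast
qed

definition discd :: "(complex \<Rightarrow> complex^'n) \<Rightarrow> complex \<Rightarrow> complex^'n" where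
  "discd f w = (\<chi> i. deriv (\<lambda>z. f z $ i) w)"

lemma holo_disc_deriv:
  assumes "holo_disc f" "w \<in> ball 0 1"
  shows "(f has_derivative (\<lambda>c. c *s discd f w)) (at w)"
  unfolding discd_def
proof (rule vec_has_derivative)
  fix i
  have "(\<lambda>z. f z $ i) holomorphic_on ball 0 1" using assms(1) unfolding holo_disc_def by auto
  then show "((\<lambda>z. f z $ i) has_field_derivative deriv (\<lambda>z. f z $ i) w) (at w)"
    using assms(2) holomorphic_derivI by blast
qed




lemma halfplane_real:
  fixes x y a b s :: real
  assumes "x < 0" "a < 0" "0 \<le> s" "s < 1"
    and "(x-a)^2 + (y-b)^2 \<le> s^2 * ((x+a)^2 + (y-b)^2)"
  shows "\<bar>x\<bar> \<le> \<bar>a\<bar> * (1 + s) / (1 - s)"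
proof -
  have "(x-a)^2 \<le> s^2 * (x+a)^2"
  proof -
    have "(s^2 - 1) * (y-b)^2 \<le> 0"
      using assms by (intro mult_nonpos_nonneg) (auto simp: power_le_one_iff abs_square_le_1)
    then show ?thesis using assms(5) by (simp add: algebra_simps)
  qed
  then have "\<bar>x - a\<bar> \<le> \<bar>s * (x + a)\<bar>"
    by (simp add: power_mult_distrib[symmetric] abs_le_square_iff)
  also have "\<dots> = s * (- x - a)" using assms by (simp add: abs_mult)
  finally have "\<bar>x - a\<bar> \<le> s * (- x - a)" .
  then have "- x * (1 - s) \<le> - a * (1 + s)" by (auto simp: algebra_simps)
  then show ?thesis using assms by (simp add: field_simps)
qed

lemma halfplane:
  fixes g :: "complex \<Rightarrow> complex"
  assumes hol: "g holomorphic_on ball 0 1" and neg: "\<And>z. z \<in> ball 0 1 \<Longrightarrow> Re (g z) < 0"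
  shows "cmod (deriv g 0) \<le> 2 * \<bar>Re (g 0)\<bar>"
    and "\<And>z. z \<in> ball 0 1 \<Longrightarrow> \<bar>Re (g z)\<bar> \<le> \<bar>Re (g 0)\<bar> * (1 + cmod z) / (1 - cmod z)"
proof -
  define a where "a = g 0"
  have a: "Re a < 0" using neg[of 0] by (simp add: a_def)
  have nz: "g z + cnj a \<noteq> 0" if "z \<in> ball 0 1" for z
  proof
    assume "g z + cnj a = 0"
    then have "Re (g z + cnj a) = 0" by simp
    then show False using neg[OF that] a by simp
  qed
  define \<phi> where "\<phi> z = (g z - a) / (g z + cnj a)" for z
  have key: "cmod (w - a) ^ 2 = (Re w - Re a)^2 + (Im w - Im a)^2"
    and key2: "cmod (w + cnj a) ^ 2 = (Re w + Re a)^2 + (Im w - Im a)^2" for w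
    by (simp_all add: cmod_power2)
  have lt: "cmod (w - a) < cmod (w + cnj a)" if "Re w < 0" for w
  proof -
    have "cmod (w - a) ^ 2 < cmod (w + cnj a) ^ 2"
      unfolding key key2 using that a by (simp add: power2_eq_square algebra_simps mult_pos_pos mult_neg_neg)
    then show ?thesis by (simp add: power2_less_imp_less)
  qed
  have holphi: "\<phi> holomorphic_on ball 0 1"
    unfolding \<phi>_def using nz by (intro holomorphic_intros hol) auto
  have phi0: "\<phi> 0 = 0" by (simp add: \<phi>_def a_def)
  have phin: "norm (\<phi> z) < 1" if "norm z < 1" for z
  proof -
    have zb: "z \<in> ball 0 1" using that by simp
    have "cmod (g z - a) < cmod (g z + cnj a)" using lt neg[OF zb] by blast
    then show ?thesis using nz[OF zb] by (simp add: \<phi>_def norm_divide divide_less_eq)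
  qed
  note S = Schwarz_Lemma[OF holphi phi0 phin]
  have gd: "(g has_field_derivative deriv g 0) (at 0)"
    using hol by (auto intro: holomorphic_derivI)
  have "(\<phi> has_field_derivative ((deriv g 0 * (g 0 + cnj a) - (g 0 - a) * deriv g 0) / (g 0 + cnj a)^2)) (at 0)"
    unfolding \<phi>_def using nz[of 0]
    by (auto intro!: derivative_eq_intros gd simp: power2_eq_square)
  then have "deriv \<phi> 0 = (deriv g 0 * (g 0 + cnj a) - (g 0 - a) * deriv g 0) / (g 0 + cnj a)^2"
    by (rule DERIV_imp_deriv)
  also have "\<dots> = deriv g 0 / (a + cnj a)"
  proof -
    have n0: "a + cnj a \<noteq> 0" using nz[of 0] by (simp add: a_def)
    have "(deriv g 0 * (g 0 + cnj a) - (g 0 - a) * deriv g 0) = deriv g 0 * (a + cnj a)"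
      by (simp add: a_def)
    then show ?thesis using n0 by (simp add: a_def power2_eq_square)
  qed
  also have "a + cnj a = complex_of_real (2 * Re a)" by (simp add: complex_eq_iff)
  finally have "deriv \<phi> 0 = deriv g 0 / complex_of_real (2 * Re a)" .
  then have "cmod (deriv \<phi> 0) = cmod (deriv g 0) / (2 * \<bar>Re a\<bar>)"
    by (simp add: norm_divide)
  then have "cmod (deriv g 0) / (2 * \<bar>Re a\<bar>) \<le> 1" using S(2)[of 0] by simp
  moreover have "0 < 2 * \<bar>Re a\<bar>" using a by simp
  ultimately have "cmod (deriv g 0) \<le> 2 * \<bar>Re a\<bar>"
    using pos_divide_le_eq by fastforce
  then have "cmod (deriv g 0) \<le> cmod (complex_of_real (2 * Re a))"
    by simp
  then show "cmod (deriv g 0) \<le> 2 * \<bar>Re (g 0)\<bar>" by (simp add: a_def)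
  fix z :: complex assume zb: "z \<in> ball 0 1"
  define w where "w = g z"
  have s1: "cmod (\<phi> z) \<le> cmod z" using S(1)[of z] zb by simp
  have "cmod (w - a) = cmod (\<phi> z) * cmod (w + cnj a)"
    using nz[OF zb] by (simp add: \<phi>_def w_def norm_divide)
  then have "cmod (w - a)^2 = cmod (\<phi> z)^2 * cmod (w + cnj a)^2" by (simp add: power_mult_distrib)
  then have eq: "(Re w - Re a)^2 + (Im w - Im a)^2 \<le> cmod (\<phi> z)^2 * ((Re w + Re a)^2 + (Im w - Im a)^2)"
    unfolding key key2 by simp
  have "\<bar>Re w\<bar> \<le> \<bar>Re a\<bar> * (1 + cmod (\<phi> z)) / (1 - cmod (\<phi> z))"
    by (rule halfplane_real[OF _ a _ _ eq]) (use neg[OF zb] s1 zb in \<open>auto simp: w_def\<close>)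
  also have "\<dots> \<le> \<bar>Re a\<bar> * (1 + cmod z) / (1 - cmod z)"
  proof -
    have "(1 + cmod (\<phi> z)) / (1 - cmod (\<phi> z)) \<le> (1 + cmod z) / (1 - cmod z)"
      using s1 zb by (simp add: divide_simps) (simp add: algebra_simps)
    then show ?thesis by (simp add: mult_left_mono times_divide_eq_right[symmetric] del: times_divide_eq_right)
  qed
  finally show "\<bar>Re (g z)\<bar> \<le> \<bar>Re (g 0)\<bar> * (1 + cmod z) / (1 - cmod z)" by (simp add: w_def a_def)
qed




lemma separate_open_convex:
  fixes G :: "(complex^'n) set"
  assumes "open G" "convex G" "q \<notin> G"
  obtains n where "norm n = 1" "\<And>y. y \<in> G \<Longrightarrow> inner (y - q) n < 0"
proof (cases "G = {}")
  case True
  obtain b :: "complex^'n" where "b \<in> Basis" using nonempty_Basis by blast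
  show ?thesis by (rule that[of b]) (auto simp: True norm_Basis \<open>b \<in> Basis\<close>)
next
  case False
  have cv: "convex ((+) (-q) ` G)" using assms(2) by (rule convex_translation)
  have "0 \<notin> (+) (-q) ` G" using assms(3) by auto
  from separating_hyperplane_set_0[OF cv this]
  obtain a where a: "a \<noteq> 0" "\<And>y. y \<in> G \<Longrightarrow> 0 \<le> inner a (y - q)" by auto
  have strict: "0 < inner a (y - q)" if y: "y \<in> G" for y
  proof (rule ccontr)
    assume "\<not> 0 < inner a (y - q)"
    then have z: "inner a (y - q) = 0" using a(2)[OF y] by simp
    obtain e where e: "e > 0" "ball y e \<subseteq> G" using assms(1) y open_contains_ball by blast
    define y' where "y' = y - (e / 2 / norm a) *\<^sub>R a"
    have "dist y y' = e / 2" using a(1) e by (simp add: y'_def dist_norm)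
    then have "y' \<in> G" using e by auto
    moreover have "inner a (y' - q) = - (e / 2) * norm a"
      using z a(1) by (simp add: y'_def inner_diff_right algebra_simps power2_norm_eq_inner[symmetric] power2_eq_square)
    moreover have "- (e / 2) * norm a < 0" using e a(1) by simp
    ultimately show False using a(2) by fastforce
  qed
  show ?thesis
  proof (rule that[of "- (1 / norm a) *\<^sub>R a"])
    show "norm (- (1 / norm a) *\<^sub>R a) = 1" using a(1) by simp
    fix y assume "y \<in> G"
    then show "inner (y - q) (- (1 / norm a) *\<^sub>R a) < 0"
      using strict[of y] a(1) by (simp add: inner_commute)
  qed
qed




lemma cip_disc_deriv:
  assumes hD: "\<And>w. w \<in> ball 0 1 \<Longrightarrow> (h has_derivative (\<lambda>c. c *s hD w)) (at w)"
    and w: "w \<in> ball 0 1"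
  shows "((\<lambda>w. cip (h w - q) n) has_field_derivative cip (hD w) n) (at w)"
proof -
  have "((\<lambda>w. h w - q) has_derivative (\<lambda>c. c *s hD w)) (at w)"
    using hD[OF w] by (auto intro!: derivative_eq_intros)
  then have "((\<lambda>w. cip (h w - q) n) has_derivative (\<lambda>c. cip (c *s hD w) n)) (at w)"
    by (rule bounded_linear.has_derivative[OF bounded_linear_cip])
  moreover have "(\<lambda>c. cip (c *s hD w) n) = (*) (cip (hD w) n)"
    by (auto simp: cip_smult mult.commute)
  ultimately show ?thesis by (simp add: has_field_derivative_def)
qed

lemma cip_disc_holo:
  assumes hD: "\<And>w. w \<in> ball 0 1 \<Longrightarrow> (h has_derivative (\<lambda>c. c *s hD w)) (at w)"
  shows "(\<lambda>w. cip (h w - q) n) holomorphic_on ball 0 1"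
  using cip_disc_deriv[OF hD] unfolding holomorphic_on_open[OF open_ball] by blast

lemma convex_disc_dir:
  fixes G :: "(complex^'n) set"
  assumes G: "open G" "convex G"
    and hD: "\<And>w. w \<in> ball 0 1 \<Longrightarrow> (h has_derivative (\<lambda>c. c *s hD w)) (at w)"
    and hG: "h ` ball 0 1 \<subseteq> G"
    and out: "h 0 + z0 *s hD 0 \<notin> G"
  shows "norm (hD 0) \<le> 2 * norm (z0 *s hD 0)"
proof -
  define q where "q = h 0 + z0 *s hD 0"
  obtain n where n: "norm n = 1" "\<And>y. y \<in> G \<Longrightarrow> inner (y - q) n < 0"
    using separate_open_convex[OF G out[folded q_def]] by blast
  define g where "g w = cip (h w - q) n" for w
  have holg: "g holomorphic_on ball 0 1" unfolding g_def by (rule cip_disc_holo[OF hD])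
  have neg: "Re (g w) < 0" if "w \<in> ball 0 1" for w
  proof -
    have "h w \<in> G" using hG that by blast
    then show ?thesis using n(2)[of "h w"] by (simp add: g_def Re_cip)
  qed
  have dg: "deriv g 0 = cip (hD 0) n"
  proof -
    have z0: "(0::complex) \<in> ball 0 1" by simp
    show ?thesis unfolding g_def by (rule DERIV_imp_deriv[OF cip_disc_deriv[OF hD z0]])
  qed
  have g0: "g 0 = - z0 * cip (hD 0) n"
    by (simp add: g_def q_def cip_minus cip_smult)
  have H: "cmod (cip (hD 0) n) \<le> 2 * \<bar>Re (g 0)\<bar>"
    using halfplane(1)[OF holg neg] dg by simp
  show ?thesis
  proof (cases "cip (hD 0) n = 0")
    case True
    then have "Re (g 0) = 0" by (simp add: g0)
    with neg[of 0] show ?thesis by simp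
  next
    case False
    have "\<bar>Re (g 0)\<bar> \<le> cmod (g 0)" by (rule abs_Re_le_cmod)
    also have "\<dots> = cmod z0 * cmod (cip (hD 0) n)" by (simp add: g0 norm_mult)
    finally have "cmod (cip (hD 0) n) \<le> 2 * cmod z0 * cmod (cip (hD 0) n)" using H by linarith
    then have one: "1 \<le> 2 * cmod z0" using False by (simp add: mult_le_cancel_right1)
    then have "norm (hD 0) \<le> 2 * cmod z0 * norm (hD 0)"
      using mult_right_mono[OF one norm_ge_zero[of "hD 0"]] by simp
    then show ?thesis by (simp add: norm_smult_vec mult.assoc)
  qed
qed

lemma convex_disc_dist:
  fixes G :: "(complex^'n) set"
  assumes G: "open G" "convex G"
    and hD: "\<And>w. w \<in> ball 0 1 \<Longrightarrow> (h has_derivative (\<lambda>c. c *s hD w)) (at w)"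
    and hG: "h ` ball 0 1 \<subseteq> G"
    and q: "q \<notin> G" and w: "w \<in> ball 0 1"
  shows "bdist G (h w) \<le> norm (h 0 - q) * (1 + cmod w) / (1 - cmod w)"
proof -
  obtain n where n: "norm n = 1" "\<And>y. y \<in> G \<Longrightarrow> inner (y - q) n < 0"
    using separate_open_convex[OF G q] by blast
  define g where "g w = cip (h w - q) n" for w
  have holg: "g holomorphic_on ball 0 1" unfolding g_def by (rule cip_disc_holo[OF hD])
  have neg: "Re (g w) < 0" if "w \<in> ball 0 1" for w
  proof -
    have "h w \<in> G" using hG that by blast
    then show ?thesis using n(2)[of "h w"] by (simp add: g_def Re_cip)
  qed
  have bd: "bdist G y \<le> \<bar>inner (y - q) n\<bar>" for y
  proof -
    define y' where "y' = y - (inner (y - q) n) *\<^sub>R n"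
    have nn: "inner n n = 1" using n(1) by (simp add: power2_norm_eq_inner[symmetric])
    have "inner (y' - q) n = 0"
      by (simp add: y'_def inner_diff_left nn)
    then have "y' \<in> UNIV - G" using n(2)[of y'] by auto
    then have "bdist G y \<le> dist y y'" unfolding bdist_def by (rule infdist_le)
    also have "\<dots> = \<bar>inner (y - q) n\<bar>" by (simp add: y'_def dist_norm n(1))
    finally show ?thesis .
  qed
  have "bdist G (h w) \<le> \<bar>Re (g w)\<bar>" using bd by (simp add: g_def Re_cip)
  also have "\<dots> \<le> \<bar>Re (g 0)\<bar> * (1 + cmod w) / (1 - cmod w)"
    by (rule halfplane(2)[OF holg neg w])
  also have "\<bar>Re (g 0)\<bar> \<le> norm (h 0 - q)"
    using Cauchy_Schwarz_ineq2[of "h 0 - q" n] n(1) by (simp add: g_def Re_cip)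
  then have "\<bar>Re (g 0)\<bar> * (1 + cmod w) / (1 - cmod w) \<le> norm (h 0 - q) * (1 + cmod w) / (1 - cmod w)"
    using w by (intro divide_right_mono mult_right_mono) auto
  finally show ?thesis .
qed




lemma vec_schwarz:
  fixes h :: "complex \<Rightarrow> complex^'n"
  assumes hD: "\<And>w. w \<in> ball 0 1 \<Longrightarrow> (h has_derivative (\<lambda>c. c *s hD w)) (at w)"
    and B: "\<And>w. w \<in> ball 0 1 \<Longrightarrow> norm (h w - h 0) < B"
    and w: "w \<in> ball 0 1"
  shows "norm (h w - h 0) \<le> B * cmod w"
proof (cases "h w = h 0")
  case True
  have "0 < B" using B[of 0] by simp
  then show ?thesis using True by simp
next
  case False
  have Bp: "0 < B" using B[of 0] by simp
  define x where "x = h w - h 0"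
  have xn: "norm x > 0" using False by (simp add: x_def)
  define m where "m = (1 / norm x) *\<^sub>R x"
  have m1: "norm m = 1" using xn by (simp add: m_def)
  define g where "g z = cip (h z - h 0) m / complex_of_real B" for z
  have holg: "g holomorphic_on ball 0 1"
    unfolding g_def using cip_disc_holo[OF hD, of "h 0" m] by (intro holomorphic_intros) auto
  have g0: "g 0 = 0" by (simp add: g_def cip_def)
  have gn: "norm (g z) < 1" if "norm z < 1" for z
  proof -
    have "cmod (cip (h z - h 0) m) \<le> norm (h z - h 0) * norm m" by (rule norm_cip)
    also have "\<dots> < B" using B[of z] that m1 by simp
    finally show ?thesis using Bp by (simp add: g_def norm_divide)
  qed
  have "cmod (g w) \<le> cmod w" using Schwarz_Lemma(1)[OF holg g0 gn] w by simp
  moreover have "norm x / B \<le> cmod (g w)"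
  proof -
    have "Re (g w) = inner x m / B" by (simp add: g_def x_def Re_cip Re_divide_of_real)
    also have "inner x m = norm x"
      using xn by (simp add: m_def power2_norm_eq_inner[symmetric] power2_eq_square)
    finally have "Re (g w) = norm x / B" .
    then show ?thesis using complex_Re_le_cmod by metis
  qed
  ultimately have "norm x / B \<le> cmod w" by linarith
  then show ?thesis using Bp by (simp add: x_def divide_le_eq mult.commute)
qed

definition kset :: "(complex^'n) set \<Rightarrow> complex^'n \<Rightarrow> complex^'n \<Rightarrow> real set" where
  "kset \<Omega> p v = {cmod \<zeta> | \<zeta>. \<exists>f. holo_disc f \<and> f ` ball 0 1 \<subseteq> \<Omega> \<and> f 0 = p
        \<and> \<zeta> *s disc_deriv0 f = v}"

lemma kobayashi_kset: "kobayashi \<Omega> p v = Inf (kset \<Omega> p v)"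
  unfolding kobayashi_def kset_def ..

lemma kset_bdd: "bdd_below (kset \<Omega> p v)"
  unfolding kset_def by (rule bdd_belowI[of _ 0]) auto

lemma kset_mono: "U \<subseteq> W \<Longrightarrow> kset U p v \<subseteq> kset W p v"
  unfolding kset_def by blast

lemma kset_nonempty:
  assumes "open U" "p \<in> U"
  shows "kset U p v \<noteq> {}"
proof -
  obtain e where e: "e > 0" "ball p e \<subseteq> U" using assms open_contains_ball by blast
  define k where "k = e / (2 * (norm v + 1))"
  have kpos: "2 * (norm v + 1) > 0" by (simp add: add_nonneg_pos)
  have k: "k > 0" unfolding k_def by (rule divide_pos_pos[OF e(1) kpos])
  define f where "f z = p + (complex_of_real k * z) *s v" for z
  have hd: "holo_disc f" unfolding holo_disc_def f_def
    by (auto intro!: holomorphic_intros)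
  have d: "disc_deriv0 f = complex_of_real k *s v"
    unfolding disc_deriv0_def f_def
  proof (rule vec_eq_iff[THEN iffD2], intro allI)
    fix i
    have "((\<lambda>z. (p + (complex_of_real k * z) *s v) $ i) has_field_derivative complex_of_real k * v $ i) (at 0)"
      by (auto intro!: derivative_eq_intros)
    then show "(\<chi> i. deriv (\<lambda>z. (p + (complex_of_real k * z) *s v) $ i) 0) $ i = (complex_of_real k *s v) $ i"
      by (simp add: DERIV_imp_deriv)
  qed
  have img: "f ` ball 0 1 \<subseteq> U"
  proof
    fix y assume "y \<in> f ` ball 0 1"
    then obtain z where z: "cmod z < 1" "y = f z" by auto
    have "dist p y = k * cmod z * norm v"
      using k by (simp add: z f_def dist_norm norm_smult_vec norm_mult)
    also have "\<dots> \<le> k * norm v" using z k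
    proof -
      have "cmod z * norm v \<le> 1 * norm v" using z by (intro mult_right_mono) auto
      then show ?thesis using k by (simp add: mult.assoc mult_left_mono)
    qed
    also have "\<dots> \<le> k * (norm v + 1)" using k by simp
    also have "\<dots> = e / 2"
    proof -
      have "norm v + 1 > 0" by (simp add: add_nonneg_pos)
      then show ?thesis unfolding k_def by (simp add: field_simps)
    qed
    also have "\<dots> < e" using e by simp
    finally show "y \<in> U" using e by auto
  qed
  have "(complex_of_real (1/k)) *s disc_deriv0 f = v"
    using k by (simp add: d vector_smult_assoc)
  moreover have "f 0 = p" by (simp add: f_def)
  ultimately have "cmod (complex_of_real (1/k)) \<in> kset U p v"
    unfolding kset_def using hd img by blast
  then show ?thesis by blast
qed

lemma kset_rescale:
  assumes hdf: "holo_disc f" and f0: "f 0 = p" and fv: "\<zeta> *s disc_deriv0 f = v"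
    and fr: "f ` ball 0 r \<subseteq> W" and r: "0 < r" "r \<le> 1"
  shows "cmod \<zeta> / r \<in> kset W p v"
proof -
  define g where "g z = f (complex_of_real r * z)" for z
  have maps: "complex_of_real r * z \<in> ball 0 1" if "z \<in> ball 0 1" for z
  proof -
    have "r * cmod z \<le> 1 * cmod z" using r by (intro mult_right_mono) auto
    then show ?thesis using that r by (simp add: norm_mult)
  qed
  have hg: "holo_disc g" unfolding holo_disc_def g_def
  proof
    fix i
    have "(\<lambda>z. f z $ i) holomorphic_on ball 0 1" using hdf by (simp add: holo_disc_def)
    moreover have "(\<lambda>z. complex_of_real r * z) holomorphic_on ball 0 1"
      by (auto intro!: holomorphic_intros)
    ultimately have "((\<lambda>z. f z $ i) \<circ> (\<lambda>z. complex_of_real r * z)) holomorphic_on ball 0 1"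
      using maps by (intro holomorphic_on_compose_gen) auto
    then show "(\<lambda>z. f (complex_of_real r * z) $ i) holomorphic_on ball 0 1"
      by (simp add: o_def)
  qed
  have dg: "disc_deriv0 g = complex_of_real r *s disc_deriv0 f"
  proof (rule vec_eq_iff[THEN iffD2], intro allI)
    fix i
    have "(\<lambda>z. f z $ i) holomorphic_on ball 0 1" using hdf by (simp add: holo_disc_def)
    then have fd: "((\<lambda>z. f z $ i) has_field_derivative deriv (\<lambda>z. f z $ i) 0) (at 0)"
      by (auto intro: holomorphic_derivI)
    have gd: "((\<lambda>z. complex_of_real r * z) has_field_derivative complex_of_real r) (at 0)"
      by (auto intro!: derivative_eq_intros)
    have fd': "((\<lambda>z. f z $ i) has_field_derivative deriv (\<lambda>z. f z $ i) 0) (at ((\<lambda>z. complex_of_real r * z) 0))"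
      using fd by simp
    have "((\<lambda>z. f (complex_of_real r * z) $ i) has_field_derivative deriv (\<lambda>z. f z $ i) 0 * complex_of_real r) (at 0)"
      using DERIV_chain2[OF fd' gd] by simp
    then show "disc_deriv0 g $ i = (complex_of_real r *s disc_deriv0 f) $ i"
      by (simp add: disc_deriv0_def g_def DERIV_imp_deriv mult.commute)
  qed
  have gimg: "g ` ball 0 1 \<subseteq> W"
  proof
    fix y assume "y \<in> g ` ball 0 1"
    then obtain z where z: "z \<in> ball 0 1" "y = g z" by auto
    have "complex_of_real r * z \<in> ball 0 r" using z r by (simp add: norm_mult)
    then show "y \<in> W" using fr z by (auto simp: g_def)
  qed
  have "(\<zeta> / complex_of_real r) *s disc_deriv0 g = v"
    using r fv by (simp add: dg vector_smult_assoc)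
  moreover have "g 0 = p" using f0 by (simp add: g_def)
  ultimately have "cmod (\<zeta> / complex_of_real r) \<in> kset W p v"
    unfolding kset_def using hg gimg by blast
  then show ?thesis using r by (simp add: norm_divide)
qed




lemma smult_vec_assoc: "(a * b) *s (v::complex^'n) = a *s (b *s v)"
  by (simp add: vector_smult_assoc)

lemma reparam_deriv:
  fixes F :: "complex \<Rightarrow> complex^'n"
  assumes "(F has_derivative (\<lambda>c. c *s FD (w + s * l))) (at (w + s * l))"
  shows "((\<lambda>l. F (w + s * l)) has_derivative (\<lambda>c. c *s (s *s FD (w + s * l)))) (at l)"
proof -
  have "((\<lambda>l. w + s * l) has_derivative (\<lambda>c. s * c)) (at l)"
    by (auto intro!: derivative_eq_intros)
  from has_derivative_compose[OF this assms]
  have "((\<lambda>l. F (w + s * l)) has_derivative (\<lambda>c. (s * c) *s FD (w + s * l))) (at l)"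
    by (simp add: o_def)
  moreover have "(\<lambda>c. (s * c) *s FD (w + s * l)) = (\<lambda>c. c *s (s *s FD (w + s * l)))"
    by (rule ext) (simp add: vec_eq_iff)
  ultimately show ?thesis by simp
qed

lemma path_deriv:
  fixes F :: "complex \<Rightarrow> complex^'n"
  assumes "(F has_derivative (\<lambda>c. c *s u)) (at (complex_of_real t * e))"
  shows "((\<lambda>t. F (complex_of_real t * e)) has_vector_derivative (e *s u)) (at t)"
proof -
  have "((\<lambda>t. complex_of_real t * e) has_derivative (\<lambda>x. complex_of_real x * e)) (at t)"
    by (auto intro!: derivative_eq_intros)
  from has_derivative_compose[OF this assms]
  have "((\<lambda>t. F (complex_of_real t * e)) has_derivative (\<lambda>x. (complex_of_real x * e) *s u)) (at t)"
    by (simp add: o_def)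
  moreover have "(\<lambda>x. (complex_of_real x * e) *s u) = (\<lambda>x. x *\<^sub>R (e *s u))"
  proof (rule ext)
    fix x :: real
    show "(complex_of_real x * e) *s u = x *\<^sub>R (e *s u)"
      by (simp add: vec_eq_iff scaleR_conv_of_real[where 'a=complex] mult.assoc)
  qed
  ultimately show ?thesis by (simp add: has_vector_derivative_def)
qed

lemma chart_comp:
  assumes hm: "holo_map \<Phi>0 V0" and hdf: "holo_disc f" and z: "z \<in> ball 0 1" and fz: "f z \<in> V0"
  shows "\<exists>u. ((\<lambda>z. \<Phi>0 (f z)) has_derivative (\<lambda>c. c *s u)) (at z)"
proof -
  obtain Lm where Lm: "(\<Phi>0 has_derivative Lm) (at (f z))" "\<And>c y. Lm (c *s y) = c *s Lm y"
    using hm fz unfolding holo_map_def by blast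
  have "(f has_derivative (\<lambda>c. c *s discd f z)) (at z)" by (rule holo_disc_deriv[OF hdf z])
  from has_derivative_compose[OF this Lm(1)]
  have "((\<lambda>z. \<Phi>0 (f z)) has_derivative (\<lambda>c. c *s Lm (discd f z))) (at z)"
    by (simp add: o_def Lm(2))
  then show ?thesis by blast
qed




lemma powr_neg_aux:
  fixes x a :: real
  assumes "x > 0"
  shows "x powr (- a - 1) = 1 / (x powr a * x)"
  using assms by (simp add: powr_diff powr_minus divide_inverse)

lemma exit_radius:
  fixes \<Omega> V0 :: "(complex^'n) set" and \<Phi>0 :: "complex^'n \<Rightarrow> complex^'n"
    and f :: "complex \<Rightarrow> complex^'n"
  assumes Bd: "\<And>x y. x \<in> \<Omega> \<Longrightarrow> y \<in> \<Omega> \<Longrightarrow> norm (x - y) < B"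
    and hm: "holo_map \<Phi>0 V0"
    and lip: "\<And>x y. x \<in> V0 \<Longrightarrow> y \<in> V0 \<Longrightarrow>
        norm (x - y) / C \<le> norm (\<Phi>0 x - \<Phi>0 y) \<and> norm (\<Phi>0 x - \<Phi>0 y) \<le> C * norm (x - y)"
    and Cp: "C > 0" and \<tau>: "\<tau> > 0" and L: "L \<ge> 1"
    and Vb: "ball \<xi> \<tau> \<subseteq> V0"
    and Gop: "open (\<Phi>0 ` (V0 \<inter> \<Omega>))" and Gcv: "convex (\<Phi>0 ` (V0 \<inter> \<Omega>))"
    and good: "\<And>x u. x \<in> \<Phi>0 ` (V0 \<inter> \<Omega>) \<Longrightarrow> u \<noteq> 0 \<Longrightarrow>
        bdist_dir (\<Phi>0 ` (V0 \<inter> \<Omega>)) x u \<le> ereal (C * bdist (\<Phi>0 ` (V0 \<inter> \<Omega>)) x powr (1 / real L))"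
    and hdf: "holo_disc f" and f\<Omega>: "f ` ball 0 1 \<subseteq> \<Omega>" and f0: "f 0 = p"
    and p\<xi>: "norm (p - \<xi>) < \<tau> / 8"
    and y0: "y0 \<notin> \<Omega>" "norm (y0 - p) \<le> 2 * \<delta>" and \<delta>: "0 < \<delta>" "\<delta> < \<tau> / 8"
    and M: "4 * C / ((\<tau> / (8 * B)) * M) \<le> (\<tau> / (16 * C^2 * real L)) ^ L" "M > 0" "M * \<delta> < 1"
  shows "f ` ball 0 (1 - M * \<delta>) \<subseteq> ball \<xi> (\<tau> / 2)"
proof (rule ccontr)
  assume "\<not> ?thesis"
  then obtain z0 where z0': "z0 \<in> ball 0 (1 - M * \<delta>)" "f z0 \<notin> ball \<xi> (\<tau> / 2)" by blast
  then have z0: "cmod z0 < 1 - M * \<delta>" "f z0 \<notin> ball \<xi> (\<tau> / 2)" by auto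
  define G where "G = \<Phi>0 ` (V0 \<inter> \<Omega>)"
  define \<eta> where "\<eta> = \<tau> / (8 * B)"
  define a where "a = \<tau> / (16 * C^2 * real L)"
  have M\<delta>p: "M * \<delta> > 0" using M(2) \<delta>(1) by simp
  have z0b: "z0 \<in> ball 0 1" using z0 M\<delta>p by simp
  have fin: "f w \<in> \<Omega>" if "w \<in> ball 0 1" for w using f\<Omega> that by blast
  have p\<Omega>: "p \<in> \<Omega>" using fin[of 0] f0 by simp
  have Bp: "B > 0" using Bd[OF p\<Omega> p\<Omega>] by simp
  have \<eta>p: "\<eta> > 0" using \<tau> Bp by (simp add: \<eta>_def)
  have Lp: "real L > 0" using L by simp
  have ap: "a > 0" using \<tau> Cp Lp by (simp add: a_def)
  have fder: "\<And>w. w \<in> ball 0 1 \<Longrightarrow> (f has_derivative (\<lambda>c. c *s discd f w)) (at w)"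
    using holo_disc_deriv[OF hdf] by blast
  have fcont: "continuous_on (ball 0 1) f"
    using fder has_derivative_continuous continuous_at_imp_continuous_on by blast
  define K where "K = cball 0 (cmod z0) \<inter> (\<lambda>z. dist \<xi> (f z)) -` {\<tau>/2..}"
  have sub: "cball 0 (cmod z0) \<subseteq> ball 0 1" using z0b by auto
  have "closed K" unfolding K_def
    by (rule continuous_closed_preimage)
       (auto intro!: continuous_intros continuous_on_subset[OF fcont sub])
  then have cK: "compact K" unfolding K_def
    by (metis K_def bounded_Int bounded_cball compact_eq_bounded_closed)
  have z0K: "z0 \<in> K" using z0 by (auto simp: K_def)
  obtain zs where zs: "zs \<in> K" "\<And>z. z \<in> K \<Longrightarrow> cmod zs \<le> cmod z"
    using continuous_attains_inf[OF cK _ continuous_on_norm_id[of K]] z0K by blast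
  define \<rho> where "\<rho> = cmod zs"
  have \<rho>z0: "\<rho> \<le> cmod z0" using zs(1) by (auto simp: K_def \<rho>_def)
  have \<rho>1: "\<rho> < 1 - M * \<delta>" using \<rho>z0 z0 by simp
  have zsb: "zs \<in> ball 0 1" using \<rho>1 M\<delta>p by (simp add: \<rho>_def)
  have zsfar: "\<tau> / 2 \<le> dist \<xi> (f zs)" using zs(1) by (simp add: K_def)
  have inside: "f w \<in> ball \<xi> (\<tau> / 2)" if "cmod w < \<rho>" for w
  proof (rule ccontr)
    assume "f w \<notin> ball \<xi> (\<tau> / 2)"
    then have "w \<in> K" using that \<rho>z0 by (auto simp: K_def)
    then show False using zs(2)[of w] that by (simp add: \<rho>_def)
  qed
  have crude0: "norm (f zs - f 0) \<le> B * cmod zs"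
    by (rule vec_schwarz[OF fder _ zsb]) (use Bd fin p\<Omega> f0 in auto)
  have "\<tau> / 2 \<le> norm (f zs - p) + norm (p - \<xi>)"
    using zsfar norm_triangle_ineq[of "f zs - p" "p - \<xi>"] by (simp add: dist_norm norm_minus_commute)
  then have "\<tau> / 2 < B * \<rho> + \<tau> / 8" using crude0 p\<xi> f0 by (simp add: \<rho>_def)
  then have "3 * \<tau> / 8 < B * \<rho>" by simp
  then have \<rho>\<eta>: "\<eta> < \<rho>" using Bp \<tau> by (simp add: \<eta>_def field_simps)
  have \<rho>p: "\<rho> > 0" using \<rho>\<eta> \<eta>p by simp
  define e where "e = zs / complex_of_real \<rho>"
  have e1: "cmod e = 1" using \<rho>p by (simp add: e_def norm_divide \<rho>_def)
  have zse: "zs = complex_of_real \<rho> * e" using \<rho>p by (simp add: e_def)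
  define t1 where "t1 = \<rho> - \<eta> * (1 - \<rho>)"
  have \<rho>lt1: "\<rho> < 1" using \<rho>1 M\<delta>p by simp
  have t1pos: "0 < t1" using \<rho>\<eta> \<rho>lt1 \<eta>p unfolding t1_def
    by (smt (verit) mult_le_cancel_left1 mult_nonneg_nonneg)
  have t1\<rho>: "t1 < \<rho>" using \<rho>lt1 \<eta>p by (simp add: t1_def)
  define F where "F z = \<Phi>0 (f z)" for z
  have fV: "f z \<in> V0" if "cmod z < \<rho>" for z using inside[OF that] Vb \<tau> by auto
  have f\<Omega>': "f z \<in> \<Omega>" if "cmod z < \<rho>" for z using f\<Omega> that \<rho>lt1 by auto
  have FG: "F z \<in> G" if "cmod z < \<rho>" for z using fV[OF that] f\<Omega>'[OF that] by (auto simp: F_def G_def)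
  define FD where "FD z = (SOME u. (F has_derivative (\<lambda>c. c *s u)) (at z))" for z
  have FDd: "(F has_derivative (\<lambda>c. c *s FD z)) (at z)" if "cmod z < \<rho>" for z
  proof -
    have "\<exists>u. (F has_derivative (\<lambda>c. c *s u)) (at z)"
      unfolding F_def by (rule chart_comp[OF hm hdf _ fV[OF that]]) (use that \<rho>lt1 in auto)
    then show ?thesis unfolding FD_def by (rule someI_ex)
  qed
  have sphere_in: "complex_of_real t * e \<in> ball 0 \<rho>" if "0 \<le> t" "t < \<rho>" for t
    using that e1 by (simp add: norm_mult)
  have y0V: "y0 \<in> V0"
  proof -
    have "dist \<xi> y0 \<le> norm (p - \<xi>) + norm (y0 - p)"
      using norm_triangle_ineq[of "y0 - p" "p - \<xi>"] by (simp add: dist_norm norm_minus_commute add.commute)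
    also have "\<dots> < \<tau>" using p\<xi> y0(2) \<delta> by simp
    finally show ?thesis using Vb by auto
  qed
  have pV: "p \<in> V0" using fV[of 0] \<rho>p f0 by simp
  define q where "q = \<Phi>0 y0"
  have qG: "q \<notin> G"
  proof
    assume "q \<in> G"
    then obtain x where x: "x \<in> V0" "x \<in> \<Omega>" "\<Phi>0 x = \<Phi>0 y0" by (auto simp: G_def q_def)
    have "norm (x - y0) / C \<le> 0" using lip[OF x(1) y0V] x(3) by simp
    then have "x = y0" using Cp by (simp add: divide_le_0_iff)
    then show False using x(2) y0(1) by simp
  qed
  define D where "D = norm (F 0 - q)"
  have D0: "0 \<le> D" by (simp add: D_def)
  have Dle: "D \<le> 2 * C * \<delta>"
  proof -
    have "D \<le> C * norm (p - y0)" using lip[OF pV y0V] f0 by (simp add: D_def F_def q_def)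
    also have "\<dots> \<le> C * (2 * \<delta>)" using y0(2) Cp by (simp add: norm_minus_commute)
    finally show ?thesis by simp
  qed
  define Kc where "Kc = 2 * C * (2 * D) powr (1 / real L)"
  have Kc0: "0 \<le> Kc" using Cp by (simp add: Kc_def)
  have dbound: "norm (FD (complex_of_real t * e)) \<le> Kc * (\<rho> - t) powr (- (1 / real L) - 1)"
    if t: "0 \<le> t" "t < \<rho>" for t
  proof -
    define w where "w = complex_of_real t * e"
    define s where "s = complex_of_real (\<rho> - t)"
    have wn: "cmod w = t" using t e1 by (simp add: w_def norm_mult)
    have sn: "cmod s = \<rho> - t" unfolding s_def norm_of_real using t by simp
    have inb: "cmod (w + s * l) < \<rho>" if "l \<in> ball 0 1" for l
    proof -
      have "cmod (w + s * l) \<le> t + (\<rho> - t) * cmod l"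
        using norm_triangle_ineq[of w "s * l"] wn sn by (simp add: norm_mult)
      also have "\<dots> < t + (\<rho> - t) * 1" using that t by (intro add_strict_left_mono mult_strict_left_mono) auto
      finally show ?thesis by simp
    qed
    define h where "h l = F (w + s * l)" for l
    have hder: "(h has_derivative (\<lambda>c. c *s (s *s FD (w + s * l)))) (at l)" if "l \<in> ball 0 1" for l
      unfolding h_def by (rule reparam_deriv, rule FDd[OF inb[OF that]])
    have himg: "h ` ball 0 1 \<subseteq> G" using FG inb by (auto simp: h_def)
    define u where "u = s *s FD w"
    have h0: "h 0 = F w" by (simp add: h_def)
    have hd0: "(\<lambda>l. s *s FD (w + s * l)) 0 = u" by (simp add: u_def)
    have Fw: "F w \<in> G" using FG wn t by simp
    have ubound: "norm u \<le> 2 * (C * bdist G (F w) powr (1 / real L))"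
    proof (cases "u = 0")
      case True
      then show ?thesis using Cp by simp
    next
      case False
      have "ereal (norm u / 2) \<le> bdist_dir G (F w) u"
        unfolding bdist_dir_def
      proof (rule INF_greatest)
        fix q' assume "q' \<in> {F w + z *s u | z. True} - G"
        then obtain z where z: "q' = F w + z *s u" "q' \<notin> G" by blast
        have "h 0 + z *s (\<lambda>l. s *s FD (w + s * l)) 0 \<notin> G" using z by (simp add: h0 u_def)
        from convex_disc_dir[OF Gop[folded G_def] Gcv[folded G_def] hder himg this]
        have "norm u \<le> 2 * norm (z *s u)" by (simp add: u_def)
        then show "ereal (norm u / 2) \<le> ereal (norm (q' - F w))" by (simp add: z)
      qed
      also have "\<dots> \<le> ereal (C * bdist G (F w) powr (1 / real L))"
        using good[OF Fw[unfolded G_def] False] by (simp add: G_def)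
      finally show ?thesis by simp
    qed
    define h2 where "h2 l = F (0 + complex_of_real \<rho> * l)" for l
    have inb2: "cmod (0 + complex_of_real \<rho> * l) < \<rho>" if "l \<in> ball 0 1" for l
      using that \<rho>p by (simp add: norm_mult)
    have h2der: "(h2 has_derivative (\<lambda>c. c *s (complex_of_real \<rho> *s FD (0 + complex_of_real \<rho> * l)))) (at l)"
      if "l \<in> ball 0 1" for l
      unfolding h2_def by (rule reparam_deriv, rule FDd[OF inb2[OF that]])
    have h2img: "h2 ` ball 0 1 \<subseteq> G" using FG inb2 by (auto simp: h2_def)
    define l0 where "l0 = w / complex_of_real \<rho>"
    have l0n: "cmod l0 = t / \<rho>" using wn \<rho>p by (simp add: l0_def norm_divide)
    have l0b: "l0 \<in> ball 0 1" using l0n t \<rho>p by simp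
    have h2l0: "h2 l0 = F w" using \<rho>p by (simp add: h2_def l0_def)
    have "bdist G (h2 l0) \<le> norm (h2 0 - q) * (1 + cmod l0) / (1 - cmod l0)"
      by (rule convex_disc_dist[OF Gop[folded G_def] Gcv[folded G_def] h2der h2img qG l0b])
    also have "norm (h2 0 - q) = D" by (simp add: h2_def D_def)
    also have "D * (1 + cmod l0) / (1 - cmod l0) = D * (\<rho> + t) / (\<rho> - t)"
    proof -
      have a1: "1 + cmod l0 = (\<rho> + t) / \<rho>" "1 - cmod l0 = (\<rho> - t) / \<rho>"
        using \<rho>p unfolding l0n by (simp_all add: field_simps)
      have "\<rho> - t \<noteq> 0" using t by simp
      then show ?thesis unfolding a1 using \<rho>p by (simp add: field_simps)
    qed
    also have "\<dots> \<le> 2 * D / (\<rho> - t)"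
    proof -
      have "D * (\<rho> + t) \<le> D * 2" using D0 \<rho>lt1 t by (intro mult_left_mono) auto
      then show ?thesis using t by (simp add: divide_right_mono mult.commute)
    qed
    finally have bd: "bdist G (F w) \<le> 2 * D / (\<rho> - t)" using h2l0 by simp
    have bd0: "0 \<le> bdist G (F w)" by (simp add: bdist_def infdist_nonneg)
    have "norm u \<le> 2 * (C * (2 * D / (\<rho> - t)) powr (1 / real L))"
    proof -
      have "bdist G (F w) powr (1 / real L) \<le> (2 * D / (\<rho> - t)) powr (1 / real L)"
        by (rule powr_mono2[OF _ bd0 bd]) simp
      then have "C * bdist G (F w) powr (1 / real L) \<le> C * (2 * D / (\<rho> - t)) powr (1 / real L)"
        using Cp by (intro mult_left_mono) auto
      then show ?thesis using ubound by linarith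
    qed
    also have "(2 * D / (\<rho> - t)) powr (1 / real L) = (2 * D) powr (1 / real L) / (\<rho> - t) powr (1 / real L)"
      using D0 t by (simp add: powr_divide)
    finally have "norm u \<le> Kc / (\<rho> - t) powr (1 / real L)" by (simp add: Kc_def)
    moreover have "norm u = (\<rho> - t) * norm (FD w)" using sn by (simp add: u_def norm_smult_vec)
    ultimately have "(\<rho> - t) * norm (FD w) \<le> Kc / (\<rho> - t) powr (1 / real L)" by simp
    then have "norm (FD w) \<le> Kc / ((\<rho> - t) powr (1 / real L) * (\<rho> - t))"
      using t by (simp add: field_simps)
    also have "\<dots> = Kc * (\<rho> - t) powr (- (1 / real L) - 1)"
      using t by (simp add: powr_neg_aux)
    finally show ?thesis by (simp add: w_def)
  qed
  define \<gamma> where "\<gamma> t = F (complex_of_real t * e)" for t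
  define \<gamma>' where "\<gamma>' t = e *s FD (complex_of_real t * e)" for t
  define \<phi> where "\<phi> t = Kc * real L * (\<rho> - t) powr (- (1 / real L))" for t
  define \<phi>' where "\<phi>' t = Kc * (\<rho> - t) powr (- (1 / real L) - 1)" for t
  have \<gamma>eq: "\<gamma> = (\<lambda>t. F (complex_of_real t * e))" by (simp add: \<gamma>_def fun_eq_iff)
  have \<phi>eq: "\<phi> = (\<lambda>t. Kc * real L * (\<rho> - t) powr (- (1 / real L)))" by (simp add: \<phi>_def fun_eq_iff)
  have \<gamma>d: "(\<gamma> has_vector_derivative \<gamma>' t) (at t)" if "0 \<le> t" "t < \<rho>" for t
  proof -
    have "cmod (complex_of_real t * e) < \<rho>" using sphere_in[OF that] by simp
    from path_deriv[OF FDd[OF this]] show ?thesis by (simp add: \<gamma>eq \<gamma>'_def)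
  qed
  have \<phi>d: "(\<phi> has_vector_derivative \<phi>' t) (at t)" if "t < \<rho>" for t
  proof -
    have "((\<lambda>t. \<rho> - t) has_real_derivative -1) (at t)" by (auto intro!: derivative_eq_intros)
    from DERIV_fun_powr[OF this, of "- (1 / real L)"] that
    have "((\<lambda>t. (\<rho> - t) powr (- (1 / real L))) has_real_derivative
        (- (1 / real L)) * (\<rho> - t) powr (- (1 / real L) - of_nat 1) * -1) (at t)" by simp
    from DERIV_cmult[OF this, of "Kc * real L"]
    have "(\<phi> has_real_derivative Kc * real L * ((- (1 / real L)) * (\<rho> - t) powr (- (1 / real L) - of_nat 1) * -1)) (at t)"
      by (simp add: \<phi>eq)
    moreover have "Kc * real L * ((- (1 / real L)) * (\<rho> - t) powr (- (1 / real L) - of_nat 1) * -1) = \<phi>' t"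
      using Lp by (simp add: \<phi>'_def)
    ultimately show ?thesis by (simp add: has_real_derivative_iff_has_vector_derivative)
  qed
  have cont\<gamma>: "continuous_on {0..t1} \<gamma>"
  proof (intro continuous_at_imp_continuous_on ballI)
    fix x assume "x \<in> {0..t1}"
    then show "isCont \<gamma> x" using \<gamma>d[of x] t1\<rho> has_vector_derivative_continuous by force
  qed
  have cont\<phi>: "continuous_on {0..t1} \<phi>"
  proof (intro continuous_at_imp_continuous_on ballI)
    fix x assume "x \<in> {0..t1}"
    then show "isCont \<phi> x" using \<phi>d[of x] t1\<rho> has_vector_derivative_continuous by force
  qed
  have mvt: "norm (\<gamma> t1 - \<gamma> 0) \<le> \<phi> t1 - \<phi> 0"
  proof (rule differentiable_bound_general[OF t1pos cont\<gamma> cont\<phi>])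
    fix x assume x: "0 < x" "x < t1"
    show "(\<gamma> has_vector_derivative \<gamma>' x) (at x)" using \<gamma>d x t1\<rho> by simp
    show "(\<phi> has_vector_derivative \<phi>' x) (at x)" using \<phi>d x t1\<rho> by simp
    show "norm (\<gamma>' x) \<le> \<phi>' x" using dbound[of x] x t1\<rho> e1 by (simp add: \<gamma>'_def \<phi>'_def norm_smult_vec)
  qed
  have \<phi>0: "0 \<le> \<phi> 0" using Kc0 by (simp add: \<phi>_def)
  define X where "X = \<eta> * (1 - \<rho>)"
  have Xp: "X > 0" using \<eta>p \<rho>lt1 by (simp add: X_def)
  have \<rho>t1: "\<rho> - t1 = X" by (simp add: t1_def X_def)
  have XM: "\<eta> * (M * \<delta>) \<le> X" using \<rho>1 \<eta>p by (simp add: X_def)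
  have \<phi>t1: "\<phi> t1 = 2 * C * real L * (2 * D / X) powr (1 / real L)"
  proof -
    have pd: "(2 * D / X) powr (1 / real L) = (2 * D) powr (1 / real L) / X powr (1 / real L)"
      using D0 Xp by (simp add: powr_divide)
    have "\<phi> t1 = Kc * real L * inverse (X powr (1 / real L))"
      by (simp add: \<phi>_def \<rho>t1 powr_minus)
    also have "\<dots> = 2 * C * real L * (2 * D / X) powr (1 / real L)"
      unfolding pd Kc_def by (simp add: divide_inverse)
    finally show ?thesis .
  qed
  have ratio: "2 * D / X \<le> a ^ L"
  proof -
    have "2 * D / X \<le> 4 * C * \<delta> / (\<eta> * (M * \<delta>))"
    proof (rule frac_le)
      show "0 \<le> 4 * C * \<delta>" using Cp \<delta> by simp
      show "2 * D \<le> 4 * C * \<delta>" using Dle by simp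
      show "0 < \<eta> * (M * \<delta>)" using \<eta>p M\<delta>p by simp
    qed (rule XM)
    also have "\<dots> = 4 * C / (\<eta> * M)" using \<delta> by (simp add: field_simps)
    also have "\<dots> \<le> a ^ L" using M(1) by (simp add: \<eta>_def a_def)
    finally show ?thesis .
  qed
  have "(2 * D / X) powr (1 / real L) \<le> (a ^ L) powr (1 / real L)"
    by (rule powr_mono2) (use ratio D0 Xp in auto)
  also have "(a ^ L) powr (1 / real L) = a"
    using ap Lp by (simp add: powr_realpow[symmetric] powr_powr)
  finally have "\<phi> t1 \<le> 2 * C * real L * a" using Cp Lp unfolding \<phi>t1 by (simp add: mult_left_mono)
  then have Fdiff: "norm (F (complex_of_real t1 * e) - F 0) \<le> 2 * C * real L * a"
    using mvt \<phi>0 by (simp add: \<gamma>_def)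
  define w1 where "w1 = complex_of_real t1 * e"
  have w1n: "cmod w1 = t1" using e1 t1pos by (simp add: w1_def norm_mult)
  have fine: "norm (f w1 - p) \<le> \<tau> / 8"
  proof -
    have "norm (f w1 - f 0) / C \<le> norm (F w1 - F 0)"
      using lip[OF fV fV, of w1 0] w1n t1\<rho> \<rho>p by (simp add: F_def)
    then have A1: "norm (f w1 - f 0) \<le> C * norm (F w1 - F 0)"
      using Cp by (simp add: divide_le_eq mult.commute)
    have A2: "C * norm (F w1 - F 0) \<le> C * (2 * C * real L * a)"
      using Fdiff Cp by (simp add: w1_def)
    have "norm (f w1 - f 0) \<le> C * (2 * C * real L * a)" using A1 A2 by linarith
    also have "\<dots> = \<tau> / 8" using Cp Lp by (simp add: a_def field_simps power2_eq_square)
    finally show ?thesis by (simp add: f0)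
  qed
  define s1 where "s1 = complex_of_real (1 - t1)"
  have s1n: "cmod s1 = 1 - t1" unfolding s1_def norm_of_real using t1\<rho> \<rho>lt1 by simp
  have inb3: "w1 + s1 * l \<in> ball 0 1" if "l \<in> ball 0 1" for l
  proof -
    have "cmod (w1 + s1 * l) \<le> t1 + (1 - t1) * cmod l"
      using norm_triangle_ineq[of w1 "s1 * l"] w1n s1n by (simp add: norm_mult)
    also have "\<dots> < t1 + (1 - t1) * 1" using that t1\<rho> \<rho>lt1
      by (intro add_strict_left_mono mult_strict_left_mono) auto
    finally show ?thesis by simp
  qed
  define h3 where "h3 l = f (w1 + s1 * l)" for l
  have h3der: "(h3 has_derivative (\<lambda>c. c *s (s1 *s discd f (w1 + s1 * l)))) (at l)" if "l \<in> ball 0 1" for l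
    unfolding h3_def by (rule reparam_deriv, rule fder[OF inb3[OF that]])
  define l1 where "l1 = complex_of_real ((\<rho> - t1) / (1 - t1)) * e"
  have l1n: "cmod l1 = (\<rho> - t1) / (1 - t1)"
  proof -
    have "cmod l1 = \<bar>(\<rho> - t1) / (1 - t1)\<bar> * cmod e" unfolding l1_def norm_mult norm_of_real ..
    then show ?thesis using e1 t1\<rho> \<rho>lt1 by simp
  qed
  have l1b: "l1 \<in> ball 0 1" using l1n t1\<rho> \<rho>lt1 by (simp add: divide_less_eq)
  have h3l1: "h3 l1 = f zs"
  proof -
    have "w1 + s1 * l1 = complex_of_real (t1 + (1 - t1) * ((\<rho> - t1) / (1 - t1))) * e"
      by (simp add: w1_def s1_def l1_def algebra_simps)
    also have "t1 + (1 - t1) * ((\<rho> - t1) / (1 - t1)) = \<rho>" using t1\<rho> \<rho>lt1 by simp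
    finally show ?thesis by (simp add: h3_def zse)
  qed
  have "norm (h3 l1 - h3 0) \<le> B * cmod l1"
  proof (rule vec_schwarz[OF h3der _ l1b])
    fix w :: complex assume wb: "w \<in> ball 0 1"
    have "f (w1 + s1 * w) \<in> \<Omega>" using fin[OF inb3[OF wb]] .
    moreover have "f w1 \<in> \<Omega>" using fin w1n t1\<rho> \<rho>lt1 by simp
    ultimately show "norm (h3 w - h3 0) < B" using Bd by (simp add: h3_def)
  qed
  also have "cmod l1 \<le> \<eta>"
  proof -
    have e1': "\<rho> - t1 = \<eta> * (1 - \<rho>)" "1 - t1 = (1 + \<eta>) * (1 - \<rho>)"
      by (simp_all add: t1_def algebra_simps)
    have "(\<rho> - t1) / (1 - t1) = \<eta> / (1 + \<eta>)"
      unfolding e1' using \<rho>lt1 by simp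
    also have "\<dots> \<le> \<eta>" using \<eta>p by (simp add: divide_le_eq)
    finally show ?thesis using l1n by simp
  qed
  then have "B * cmod l1 \<le> B * \<eta>" using Bp by simp
  finally have crude: "norm (f zs - f w1) \<le> \<tau> / 8"
    using Bp h3l1 by (simp add: h3_def \<eta>_def)
  have "dist \<xi> (f zs) \<le> norm (f zs - f w1) + norm (f w1 - p) + norm (p - \<xi>)"
  proof -
    have "dist \<xi> (f zs) = norm ((f zs - f w1) + (f w1 - p) + (p - \<xi>))"
      by (simp add: dist_norm norm_minus_commute)
    also have "\<dots> \<le> norm ((f zs - f w1) + (f w1 - p)) + norm (p - \<xi>)" by (rule norm_triangle_ineq)
    also have "\<dots> \<le> norm (f zs - f w1) + norm (f w1 - p) + norm (p - \<xi>)"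
      using norm_triangle_ineq[of "f zs - f w1" "f w1 - p"] by linarith
    finally show ?thesis .
  qed
  also have "\<dots> < \<tau> / 2" using crude fine p\<xi> \<tau> by linarith
  finally show False using zsfar by simp
qed



lemma localize:
  assumes \<Omega>: "open \<Omega>" and V0: "open V0" and p: "p \<in> \<Omega>" "p \<in> V0" and r: "0 < r" "r \<le> 1"
    and ex: "\<And>f. holo_disc f \<Longrightarrow> f ` ball 0 1 \<subseteq> \<Omega> \<Longrightarrow> f 0 = p \<Longrightarrow> f ` ball 0 r \<subseteq> V0"
  shows "kobayashi \<Omega> p v \<le> kobayashi (\<Omega> \<inter> V0) p v \<and>
         kobayashi (\<Omega> \<inter> V0) p v \<le> (1 / r) * kobayashi \<Omega> p v"
proof
  have ne: "kset (\<Omega> \<inter> V0) p v \<noteq> {}" using kset_nonempty[of "\<Omega> \<inter> V0" p v] \<Omega> V0 p by auto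
  have ne2: "kset \<Omega> p v \<noteq> {}" using kset_nonempty[of \<Omega> p v] \<Omega> p by auto
  show "kobayashi \<Omega> p v \<le> kobayashi (\<Omega> \<inter> V0) p v"
    unfolding kobayashi_kset by (rule cInf_superset_mono[OF ne kset_bdd kset_mono]) auto
  have "r * kobayashi (\<Omega> \<inter> V0) p v \<le> kobayashi \<Omega> p v"
    unfolding kobayashi_kset
  proof (rule cInf_greatest[OF ne2])
    fix x assume "x \<in> kset \<Omega> p v"
    then obtain \<zeta> f where x: "x = cmod \<zeta>" "holo_disc f" "f ` ball 0 1 \<subseteq> \<Omega>" "f 0 = p"
      "\<zeta> *s disc_deriv0 f = v" unfolding kset_def by blast
    have "f ` ball 0 r \<subseteq> \<Omega> \<inter> V0"
    proof -
      have "ball (0::complex) r \<subseteq> ball 0 1" using r by auto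
      then have "f ` ball 0 r \<subseteq> \<Omega>" using x(3) by blast
      then show ?thesis using ex[OF x(2) x(3) x(4)] by blast
    qed
    from kset_rescale[OF x(2) x(4) x(5) this r]
    have "cmod \<zeta> / r \<in> kset (\<Omega> \<inter> V0) p v" .
    then have "Inf (kset (\<Omega> \<inter> V0) p v) \<le> cmod \<zeta> / r" by (rule cInf_lower[OF _ kset_bdd])
    then show "r * Inf (kset (\<Omega> \<inter> V0) p v) \<le> x" using r by (simp add: x(1) field_simps)
  qed
  then show "kobayashi (\<Omega> \<inter> V0) p v \<le> (1 / r) * kobayashi \<Omega> p v"
    using r by (simp add: field_simps)
qed

lemma kobayashi_nonneg:
  assumes "open \<Omega>" "p \<in> \<Omega>"
  shows "0 \<le> kobayashi \<Omega> p v"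
  unfolding kobayashi_kset
  by (rule cInf_greatest[OF kset_nonempty[OF assms]]) (auto simp: kset_def)




theorem theorem16p1:
  fixes \<Omega> :: "(complex^'n) set" and L :: nat
    and V :: "complex^'n \<Rightarrow> (complex^'n) set" and \<Phi> :: "complex^'n \<Rightarrow> complex^'n \<Rightarrow> complex^'n"
  assumes "bounded \<Omega>" and "open \<Omega>"
    and "locally_convexifiable \<Omega>"
    and "finite_local_line_type \<Omega> L"
    and "good_atlas \<Omega> L V \<Phi>"
  shows "\<exists>c \<epsilon>. c > 0 \<and> \<epsilon> > 0 \<and>
    (\<forall>\<xi>\<in>frontier \<Omega>. \<forall>p\<in>ball \<xi> \<epsilon> \<inter> \<Omega>. \<forall>v.
        kobayashi \<Omega> p v \<le> kobayashi (\<Omega> \<inter> V \<xi>) p v \<and>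
        kobayashi (\<Omega> \<inter> V \<xi>) p v \<le> exp (c * bdist \<Omega> p powr (1 / real L)) * kobayashi \<Omega> p v)"
proof -
  note op = assms(2)
  from assms(5) obtain C \<tau> where atlas: "locally_convex_atlas \<Omega> V \<Phi>" and Cp: "C > 0" and \<tau>p: "\<tau> > 0"
    and gd: "\<And>\<xi>. \<xi> \<in> frontier \<Omega> \<Longrightarrow> ball \<xi> \<tau> \<subseteq> V \<xi> \<and>
       (\<forall>p\<in>\<Phi> \<xi> ` (V \<xi> \<inter> \<Omega>). \<forall>v. v \<noteq> 0 \<longrightarrow>
          bdist_dir (\<Phi> \<xi> ` (V \<xi> \<inter> \<Omega>)) p v
            \<le> ereal (C * bdist (\<Phi> \<xi> ` (V \<xi> \<inter> \<Omega>)) p powr (1 / real L))) \<and>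
       (\<forall>p\<in>V \<xi>. \<forall>q\<in>V \<xi>. norm (p - q) / C \<le> norm (\<Phi> \<xi> p - \<Phi> \<xi> q) \<and>
          norm (\<Phi> \<xi> p - \<Phi> \<xi> q) \<le> C * norm (p - q))"
    unfolding good_atlas_def by blast
  obtain a0 where a0: "\<And>x. x \<in> \<Omega> \<Longrightarrow> norm x \<le> a0" using assms(1) bounded_iff by blast
  define B where "B = 2 * \<bar>a0\<bar> + 1"
  have Bp: "B > 0" by (simp add: B_def add_nonneg_pos)
  have Bd: "norm (x - y) < B" if "x \<in> \<Omega>" "y \<in> \<Omega>" for x y
  proof -
    have "norm (x - y) \<le> norm x + norm y" by (rule norm_triangle_ineq4)
    also have "\<dots> \<le> 2 * \<bar>a0\<bar>" using a0[OF that(1)] a0[OF that(2)] by linarith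
    finally show ?thesis by (simp add: B_def)
  qed
  have chart: "open (V \<xi>) \<and> holo_map (\<Phi> \<xi>) (V \<xi>) \<and> convex (\<Phi> \<xi> ` (V \<xi> \<inter> \<Omega>))
      \<and> open (\<Phi> \<xi> ` (V \<xi> \<inter> \<Omega>))" if \<xi>: "\<xi> \<in> frontier \<Omega>" for \<xi>
  proof -
    have V: "open (V \<xi>)" "biholo_onto_image (\<Phi> \<xi>) (V \<xi>)" "convex (\<Phi> \<xi> ` (V \<xi> \<inter> \<Omega>))"
      using atlas \<xi> unfolding locally_convex_atlas_def by auto
    have hm: "holo_map (\<Phi> \<xi>) (V \<xi>)" using V(2) by (simp add: biholo_onto_image_def)
    have inj: "inj_on (\<Phi> \<xi>) (V \<xi> \<inter> \<Omega>)"
      using V(2) by (simp add: biholo_onto_image_def inj_on_Int)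
    have cont: "continuous_on (V \<xi> \<inter> \<Omega>) (\<Phi> \<xi>)"
    proof (intro continuous_at_imp_continuous_on ballI)
      fix x assume "x \<in> V \<xi> \<inter> \<Omega>"
      then obtain Lm where "(\<Phi> \<xi> has_derivative Lm) (at x)" using hm unfolding holo_map_def by blast
      then show "isCont (\<Phi> \<xi>) x" by (rule has_derivative_continuous)
    qed
    have "open (\<Phi> \<xi> ` (V \<xi> \<inter> \<Omega>))"
      by (rule invariance_of_domain[OF cont _ inj]) (use V(1) op in auto)
    then show ?thesis using V hm by blast
  qed
  have dfacts: "0 < bdist \<Omega> p \<and> bdist \<Omega> p \<le> dist p \<xi> \<and> (\<exists>y0. y0 \<notin> \<Omega> \<and> norm (y0 - p) \<le> 2 * bdist \<Omega> p)"
    if \<xi>: "\<xi> \<in> frontier \<Omega>" and p: "p \<in> \<Omega>" for \<xi> p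
  proof -
    have \<xi>n: "\<xi> \<notin> \<Omega>" using \<xi> op by (simp add: frontier_def interior_open)
    have A: "UNIV - \<Omega> \<noteq> {}" "closed (UNIV - \<Omega>)" "p \<notin> UNIV - \<Omega>" using \<xi>n op p by auto
    have pos: "0 < bdist \<Omega> p" unfolding bdist_def by (rule infdist_pos_not_in_closed[OF A(2,1,3)])
    have le: "bdist \<Omega> p \<le> dist p \<xi>" unfolding bdist_def by (rule infdist_le) (use \<xi>n in auto)
    have "\<exists>y0. y0 \<in> UNIV - \<Omega> \<and> dist p y0 < 2 * bdist \<Omega> p"
    proof (rule ccontr)
      assume "\<not> ?thesis"
      then have "\<forall>y\<in>UNIV - \<Omega>. 2 * bdist \<Omega> p \<le> dist p y" by auto
      then have "2 * bdist \<Omega> p \<le> infdist p (UNIV - \<Omega>)"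
        unfolding infdist_notempty[OF A(1)] by (intro cINF_greatest A(1)) auto
      then show False using pos by (simp add: bdist_def)
    qed
    then obtain y0 where "y0 \<notin> \<Omega>" "dist p y0 < 2 * bdist \<Omega> p" by auto
    then show ?thesis using pos le by (auto simp: dist_norm norm_minus_commute intro!: exI[of _ y0])
  qed
  show ?thesis
  proof (cases "L = 0")
    case True
    define r0 where "r0 = min (1/2) (\<tau> / (4 * B))"
    have r0: "0 < r0" "r0 < 1" "r0 \<le> \<tau> / (4 * B)" using \<tau>p Bp by (auto simp: r0_def)
    define c where "c = ln (1 / r0)"
    have cp: "c > 0" using r0 by (simp add: c_def)
    have \<tau>4: "\<tau> / 4 > 0" using \<tau>p by simp
    have main: "\<forall>\<xi>\<in>frontier \<Omega>. \<forall>p\<in>ball \<xi> (\<tau> / 4) \<inter> \<Omega>. \<forall>v.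
        kobayashi \<Omega> p v \<le> kobayashi (\<Omega> \<inter> V \<xi>) p v \<and>
        kobayashi (\<Omega> \<inter> V \<xi>) p v \<le> exp (c * bdist \<Omega> p powr (1 / real L)) * kobayashi \<Omega> p v"
    proof (intro ballI allI)
      fix \<xi> p v assume \<xi>: "\<xi> \<in> frontier \<Omega>" and pp: "p \<in> ball \<xi> (\<tau> / 4) \<inter> \<Omega>"
      have D: "0 < bdist \<Omega> p" using dfacts[OF \<xi>] pp by blast
      have ch: "open (V \<xi>)" "ball \<xi> \<tau> \<subseteq> V \<xi>" using chart[OF \<xi>] gd[OF \<xi>] by auto
      have pV: "p \<in> V \<xi>" using pp ch(2) \<tau>p by auto
      have loc: "kobayashi \<Omega> p v \<le> kobayashi (\<Omega> \<inter> V \<xi>) p v \<and>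
         kobayashi (\<Omega> \<inter> V \<xi>) p v \<le> (1 / r0) * kobayashi \<Omega> p v"
      proof (rule localize[OF op ch(1) _ pV r0(1)])
        show "p \<in> \<Omega>" "r0 \<le> 1" using pp r0 by auto
        fix f assume hdf: "holo_disc f" and f\<Omega>: "f ` ball 0 1 \<subseteq> \<Omega>" and f0: "f 0 = p"
        show "f ` ball 0 r0 \<subseteq> V \<xi>"
        proof
          fix y assume "y \<in> f ` ball 0 r0"
          then obtain z where z: "cmod z < r0" "y = f z" by auto
          have zb: "z \<in> ball 0 1" using z r0 by simp
          have "norm (f z - f 0) \<le> B * cmod z"
          proof (rule vec_schwarz[OF holo_disc_deriv[OF hdf] _ zb])
            fix w :: complex assume "w \<in> ball 0 1"
            then have "f w \<in> \<Omega>" "f 0 \<in> \<Omega>" using f\<Omega> by auto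
            then show "norm (f w - f 0) < B" using Bd by blast
          qed
          also have "\<dots> \<le> B * r0" using z Bp by simp
          also have "\<dots> \<le> \<tau> / 4" using r0(3) Bp by (simp add: field_simps)
          finally have "norm (f z - p) \<le> \<tau> / 4" using f0 by simp
          moreover have "dist \<xi> p < \<tau> / 4" using pp by simp
          ultimately have "dist \<xi> (f z) < \<tau>"
          proof -
            have "dist \<xi> (f z) \<le> dist \<xi> p + dist p (f z)" by (rule dist_triangle)
            moreover have "dist p (f z) = norm (f z - p)" by (simp add: dist_norm norm_minus_commute)
            ultimately show ?thesis using \<open>norm (f z - p) \<le> \<tau> / 4\<close> \<open>dist \<xi> p < \<tau> / 4\<close> \<tau>p by linarith
          qed
          then show "y \<in> V \<xi>" using ch(2) z by auto
        qed
      qed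
      have "exp (c * bdist \<Omega> p powr (1 / real L)) = 1 / r0"
        using True D r0 by (simp add: c_def)
      then show "kobayashi \<Omega> p v \<le> kobayashi (\<Omega> \<inter> V \<xi>) p v \<and>
         kobayashi (\<Omega> \<inter> V \<xi>) p v \<le> exp (c * bdist \<Omega> p powr (1 / real L)) * kobayashi \<Omega> p v"
        using loc by auto
    qed
    show ?thesis using cp \<tau>4 main by blast
  next
    case False
    then have L1: "L \<ge> 1" by simp
    have Lp: "real L > 0" using L1 by simp
    define \<eta> where "\<eta> = \<tau> / (8 * B)"
    define a where "a = \<tau> / (16 * C^2 * real L)"
    have \<eta>p: "\<eta> > 0" using \<tau>p Bp by (simp add: \<eta>_def)
    have ap: "a > 0" using \<tau>p Cp Lp by (simp add: a_def)
    define M where "M = 4 * C / (\<eta> * a ^ L)"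
    have Mp: "M > 0" using Cp \<eta>p ap by (simp add: M_def)
    have M1: "4 * C / ((\<tau> / (8 * B)) * M) \<le> (\<tau> / (16 * C^2 * real L)) ^ L"
    proof -
      have "4 * C / (\<eta> * M) = a ^ L" using Cp \<eta>p ap by (simp add: M_def field_simps)
      then show ?thesis by (simp add: \<eta>_def a_def)
    qed
    define \<epsilon> where "\<epsilon> = min (\<tau> / 16) (min (1 / (2 * M)) (1 / 2))"
    have \<epsilon>p: "\<epsilon> > 0" using \<tau>p Mp by (simp add: \<epsilon>_def)
    have M2: "2 * M > 0" using Mp by simp
    have main: "\<forall>\<xi>\<in>frontier \<Omega>. \<forall>p\<in>ball \<xi> \<epsilon> \<inter> \<Omega>. \<forall>v.
        kobayashi \<Omega> p v \<le> kobayashi (\<Omega> \<inter> V \<xi>) p v \<and>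
        kobayashi (\<Omega> \<inter> V \<xi>) p v \<le> exp ((2 * M) * bdist \<Omega> p powr (1 / real L)) * kobayashi \<Omega> p v"
    proof (intro ballI allI)
      fix \<xi> p v assume \<xi>: "\<xi> \<in> frontier \<Omega>" and pp: "p \<in> ball \<xi> \<epsilon> \<inter> \<Omega>"
      define \<delta> where "\<delta> = bdist \<Omega> p"
      have p\<Omega>: "p \<in> \<Omega>" using pp by simp
      obtain y0 where y0: "y0 \<notin> \<Omega>" "norm (y0 - p) \<le> 2 * \<delta>" and \<delta>p: "0 < \<delta>" and \<delta>le: "\<delta> \<le> dist p \<xi>"
        using dfacts[OF \<xi> p\<Omega>] by (auto simp: \<delta>_def)
      have dp: "dist p \<xi> < \<epsilon>" using pp by (simp add: dist_commute)
      have \<delta>\<epsilon>: "\<delta> < \<epsilon>" using \<delta>le dp by simp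
      have ch: "open (V \<xi>)" "holo_map (\<Phi> \<xi>) (V \<xi>)" "convex (\<Phi> \<xi> ` (V \<xi> \<inter> \<Omega>))"
        "open (\<Phi> \<xi> ` (V \<xi> \<inter> \<Omega>))" using chart[OF \<xi>] by auto
      have g: "ball \<xi> \<tau> \<subseteq> V \<xi>" and good: "\<And>x u. x \<in> \<Phi> \<xi> ` (V \<xi> \<inter> \<Omega>) \<Longrightarrow> u \<noteq> 0 \<Longrightarrow>
        bdist_dir (\<Phi> \<xi> ` (V \<xi> \<inter> \<Omega>)) x u \<le> ereal (C * bdist (\<Phi> \<xi> ` (V \<xi> \<inter> \<Omega>)) x powr (1 / real L))"
        and lip: "\<And>x y. x \<in> V \<xi> \<Longrightarrow> y \<in> V \<xi> \<Longrightarrow>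
        norm (x - y) / C \<le> norm (\<Phi> \<xi> x - \<Phi> \<xi> y) \<and> norm (\<Phi> \<xi> x - \<Phi> \<xi> y) \<le> C * norm (x - y)"
        using gd[OF \<xi>] by auto
      have \<epsilon>\<tau>: "\<epsilon> \<le> \<tau> / 16" "\<epsilon> \<le> 1 / (2 * M)" "\<epsilon> \<le> 1 / 2" by (auto simp: \<epsilon>_def)
      have M\<delta>: "M * \<delta> \<le> 1 / 2"
      proof -
        have "M * \<delta> \<le> M * (1 / (2 * M))" using \<delta>\<epsilon> \<epsilon>\<tau>(2) Mp by (intro mult_left_mono) auto
        then show ?thesis using Mp by simp
      qed
      have pV: "p \<in> V \<xi>" using g dp \<epsilon>\<tau> \<tau>p by (auto simp: dist_commute)
      define r where "r = 1 - M * \<delta>"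
      have r: "0 < r" "r \<le> 1" "1 / 2 \<le> r" using M\<delta> Mp \<delta>p by (auto simp: r_def)
      have loc: "kobayashi \<Omega> p v \<le> kobayashi (\<Omega> \<inter> V \<xi>) p v \<and>
         kobayashi (\<Omega> \<inter> V \<xi>) p v \<le> (1 / r) * kobayashi \<Omega> p v"
      proof (rule localize[OF op ch(1) p\<Omega> pV r(1) r(2)])
        fix f assume hdf: "holo_disc f" and f\<Omega>: "f ` ball 0 1 \<subseteq> \<Omega>" and f0: "f 0 = p"
        have "f ` ball 0 (1 - M * \<delta>) \<subseteq> ball \<xi> (\<tau> / 2)"
        proof (rule exit_radius[OF Bd ch(2) lip Cp \<tau>p L1 g ch(4) ch(3) good hdf f\<Omega> f0 _ y0 \<delta>p _ M1 Mp])
          show "norm (p - \<xi>) < \<tau> / 8" using dp \<epsilon>\<tau> \<tau>p by (simp add: dist_norm)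
          show "\<delta> < \<tau> / 8" using \<delta>\<epsilon> \<epsilon>\<tau> \<tau>p by simp
          show "M * \<delta> < 1" using M\<delta> by simp
        qed
        moreover have "ball \<xi> (\<tau> / 2) \<subseteq> V \<xi>" using g \<tau>p by auto
        ultimately show "f ` ball 0 r \<subseteq> V \<xi>" unfolding r_def by blast
      qed
      have K0: "0 \<le> kobayashi \<Omega> p v" by (rule kobayashi_nonneg[OF op p\<Omega>])
      have "1 / r \<le> 1 + 2 * M * \<delta>"
      proof -
        have "(1 + 2 * M * \<delta>) * r = 1 + M * \<delta> * (1 - 2 * (M * \<delta>))" by (simp add: r_def algebra_simps)
        also have "\<dots> \<ge> 1" using M\<delta> Mp \<delta>p by (simp add: mult_nonneg_nonneg)
        finally show ?thesis using r by (simp add: divide_le_eq mult.commute)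
      qed
      also have "\<dots> \<le> exp (2 * M * \<delta>)" using exp_ge_add_one_self[of "2 * M * \<delta>"] by simp
      also have "\<dots> \<le> exp (2 * M * \<delta> powr (1 / real L))"
      proof -
        have "\<delta> powr 1 \<le> \<delta> powr (1 / real L)"
          by (rule powr_mono') (use L1 \<delta>p \<delta>\<epsilon> \<epsilon>\<tau> in auto)
        then have "\<delta> \<le> \<delta> powr (1 / real L)" using \<delta>p by simp
        then show ?thesis using Mp by simp
      qed
      finally have "1 / r \<le> exp (2 * M * \<delta> powr (1 / real L))" .
      then have "(1 / r) * kobayashi \<Omega> p v \<le> exp (2 * M * \<delta> powr (1 / real L)) * kobayashi \<Omega> p v"
        using K0 by (rule mult_right_mono)
      then show "kobayashi \<Omega> p v \<le> kobayashi (\<Omega> \<inter> V \<xi>) p v \<and>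
        kobayashi (\<Omega> \<inter> V \<xi>) p v \<le> exp ((2 * M) * bdist \<Omega> p powr (1 / real L)) * kobayashi \<Omega> p v"
        using loc by (auto simp: \<delta>_def)
    qed
    show ?thesis using M2 \<epsilon>p main by blast
  qed
qed


end
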